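(* Let $\vec\Sigma$ be a finite sequence of finite connected tight labeled graphs over $\mathcal B$ and let $\alpha$ be an elementary Whitehead automorphism of $F(\mathcal B)$ with distinguished label $b$. For each edge $e$ of $\vec\Sigma$ whose label $c$ is not in $\{b,b^{-1}\}$, the path $\alpha(e)$ in $\alpha\vec\Sigma$ contains exactly one subedge labeled $c$; let $e'$ denote its image in $\mathrm{tight}(\alpha\vec\Sigma)$. Then $e\mapsto e'$ is a bijection from the edges of $\vec\Sigma$ not labeled $b^{\pm1}$ to the edges of $\mathrm{tight}(\alpha\vec\Sigma)$ not labeled $b^{\pm1}$. (More precisely, after collapsing all edges labeled $b^{\pm 1}$ in $\vec\Sigma$ and in $\mathrm{tight}(\alpha\vec\Sigma)$, the induced map between the collapsed graphs is an isomorphism.)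
   Context: $F(\mathcal B)$ is the free group on the finite set $\mathcal B$. A labeled graph assigns labels in $\mathcal B^{\pm1}$ to oriented edges, $e^{-1}$ carrying the inverse label; it is tight if distinct oriented edges with the same initial vertex have distinct labels. Folding identifies two distinct oriented edges with common initial vertex and the same label; $\mathrm{tight}(\Sigma)$ is the tight labeled graph obtained from a finite $\Sigma$ by iterated folding (it is well defined), with the quotient map $\Sigma\to\mathrm{tight}(\Sigma)$. For $\alpha\in\mathrm{Aut}(F(\mathcal B))$, $\alpha\Sigma$ is obtained by replacing each oriented edge labeled $c$ by a path spelling the reduced word $\alpha(c)$. Operations on sequences are applied componentwise. An elementary Whitehead automorphism is either an automorphism induced by a permutation $\pi$ of $\mathcal B^{\pm1}$ with $\pi(c^{-1})=\pi(c)^{-1}$, or is determined by $b\in\mathcal B^{\pm1}$ (the distinguished label) and $A\subset\mathcal B^{\pm1}\setminus\{b,b^{-1}\}$ via $\alpha(b)=b$ and $\alpha(c)=b^{\epsilon(c)}\,c\,b^{-\epsilon(c^{-1})}$ for $c\in\mathcal B^{\pm1}\setminus\{b^{\pm1}\}$, where $\epsilon(x)=1$ if $x\in A$ and $0$ otherwise. *)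

theory Defs
  imports Main
begin

text \<open>Signed letters: (x, True) stands for x, (x, False) for x^-1.\<close>

definition sinv :: "'b \<times> bool \<Rightarrow> 'b \<times> bool" where
  "sinv c = (fst c, \<not> snd c)"

definition signed :: "'b set \<Rightarrow> ('b \<times> bool) set" where
  "signed B = B \<times> UNIV"

text \<open>Labeled graphs in Serre's formalism: darts are oriented edges, dinv is the
  fixed-point-free involution reversing orientation, init the initial vertex,
  lab the label of an oriented edge.\<close>

record ('v, 'd, 'b) lgraph =
  verts :: "'v set"
  darts :: "'d set"
  dinv  :: "'d \<Rightarrow> 'd"
  init  :: "'d \<Rightarrow> 'v"
  lab   :: "'d \<Rightarrow> 'b \<times> bool"

definition term_v :: "('v, 'd, 'b) lgraph \<Rightarrow> 'd \<Rightarrow> 'v" where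
  "term_v G d = init G (dinv G d)"

definition labeled_graph :: "'b set \<Rightarrow> ('v, 'd, 'b) lgraph \<Rightarrow> bool" where
  "labeled_graph B G \<longleftrightarrow>
     (\<forall>d\<in>darts G. dinv G d \<in> darts G \<and> dinv G (dinv G d) = d \<and> dinv G d \<noteq> d
        \<and> init G d \<in> verts G \<and> lab G d \<in> signed B
        \<and> lab G (dinv G d) = sinv (lab G d))"

definition finite_graph :: "('v, 'd, 'b) lgraph \<Rightarrow> bool" where
  "finite_graph G \<longleftrightarrow> finite (verts G) \<and> finite (darts G)"

definition adj :: "('v, 'd, 'b) lgraph \<Rightarrow> 'v \<Rightarrow> 'v \<Rightarrow> bool" where
  "adj G u v \<longleftrightarrow> (\<exists>d\<in>darts G. init G d = u \<and> term_v G d = v)"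

definition connected_graph :: "('v, 'd, 'b) lgraph \<Rightarrow> bool" where
  "connected_graph G \<longleftrightarrow> (\<forall>u\<in>verts G. \<forall>v\<in>verts G. (adj G)\<^sup>*\<^sup>* u v)"

definition tight :: "('v, 'd, 'b) lgraph \<Rightarrow> bool" where
  "tight G \<longleftrightarrow> (\<forall>d1\<in>darts G. \<forall>d2\<in>darts G.
      d1 \<noteq> d2 \<and> init G d1 = init G d2 \<longrightarrow> lab G d1 \<noteq> lab G d2)"

text \<open>A single fold: H (with quotient maps f on vertices, g on darts) is obtained from G
  by identifying two distinct darts d1, d2 with common initial vertex and equal label
  (and hence their inverses and their terminal vertices).\<close>

definition is_fold :: "('v, 'd, 'b) lgraph \<Rightarrow> ('v, 'd, 'b) lgraph \<Rightarrow> ('v \<Rightarrow> 'v) \<Rightarrow> ('d \<Rightarrow> 'd) \<Rightarrow> bool" where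
  "is_fold G H f g \<longleftrightarrow>
     (\<exists>d1\<in>darts G. \<exists>d2\<in>darts G. d1 \<noteq> d2 \<and> init G d1 = init G d2 \<and> lab G d1 = lab G d2
       \<and> verts H = f ` verts G \<and> darts H = g ` darts G
       \<and> (\<forall>x\<in>darts G. dinv H (g x) = g (dinv G x) \<and> init H (g x) = f (init G x)
                         \<and> lab H (g x) = lab G x)
       \<and> (\<forall>x\<in>darts G. \<forall>y\<in>darts G. g x = g y \<longleftrightarrow>
             (x = y \<or> {x, y} = {d1, d2} \<or> {x, y} = {dinv G d1, dinv G d2}))
       \<and> (\<forall>u\<in>verts G. \<forall>v\<in>verts G. f u = f v \<longleftrightarrow>
             (u = v \<or> {u, v} = {term_v G d1, term_v G d2})))"

inductive folds_to :: "('v, 'd, 'b) lgraph \<Rightarrow> ('v, 'd, 'b) lgraph \<Rightarrow> ('v \<Rightarrow> 'v) \<Rightarrow> ('d \<Rightarrow> 'd) \<Rightarrow> bool" where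
  refl: "folds_to G G id id"
| step: "is_fold G G1 f1 g1 \<Longrightarrow> folds_to G1 H f2 g2 \<Longrightarrow> folds_to G H (f2 \<circ> f1) (g2 \<circ> g1)"

definition is_tightening :: "('v, 'd, 'b) lgraph \<Rightarrow> ('v, 'd, 'b) lgraph \<Rightarrow> ('v \<Rightarrow> 'v) \<Rightarrow> ('d \<Rightarrow> 'd) \<Rightarrow> bool" where
  "is_tightening G H f g \<longleftrightarrow> folds_to G H f g \<and> tight H"

text \<open>Elementary Whitehead automorphism with distinguished label b and set A:
  the reduced word alpha(c) for each signed letter c.\<close>

definition wh_word :: "'b \<times> bool \<Rightarrow> ('b \<times> bool) set \<Rightarrow> 'b \<times> bool \<Rightarrow> ('b \<times> bool) list" where
  "wh_word b A c =
     (if c = b \<or> c = sinv b then [c]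
      else (if c \<in> A then [b] else []) @ [c] @ (if sinv c \<in> A then [sinv b] else []))"

definition elementary_whitehead :: "'b set \<Rightarrow> 'b \<times> bool \<Rightarrow> ('b \<times> bool) set \<Rightarrow> bool" where
  "elementary_whitehead B b A \<longleftrightarrow> b \<in> signed B \<and> A \<subseteq> signed B - {b, sinv b}"

text \<open>alpha G: each oriented edge d labeled c is replaced by a path of darts (d,0),...,(d,n-1)
  spelling w c (n = length (w c)); the dart (d,i) is inverse to (dinv d, n-1-i).
  Old vertices are Inl v; the new interior vertex before (d,k) (0<k<n) is
  Inr {(d,k), (dinv d, n-k)}.\<close>

definition subdiv :: "('b \<times> bool \<Rightarrow> ('b \<times> bool) list) \<Rightarrow> ('v, 'd, 'b) lgraph
     \<Rightarrow> ('v + ('d \<times> nat) set, 'd \<times> nat, 'b) lgraph" where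
  "subdiv w G =
     \<lparr> verts = Inl ` verts G \<union>
         {Inr {(d, k), (dinv G d, length (w (lab G d)) - k)} | d k.
            d \<in> darts G \<and> 0 < k \<and> k < length (w (lab G d))},
       darts = {(d, i). d \<in> darts G \<and> i < length (w (lab G d))},
       dinv = (\<lambda>(d, i). (dinv G d, length (w (lab G d)) - 1 - i)),
       init = (\<lambda>(d, i). if i = 0 then Inl (init G d)
                        else Inr {(d, i), (dinv G d, length (w (lab G d)) - i)}),
       lab = (\<lambda>(d, i). w (lab G d) ! i) \<rparr>"

definition sub_idx :: "'b \<times> bool \<Rightarrow> ('b \<times> bool) set \<Rightarrow> 'b \<times> bool \<Rightarrow> nat" where
  "sub_idx b A c = (THE i. i < length (wh_word b A c) \<and> wh_word b A c ! i = c)"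

text \<open>Collapsing the edges labeled b^{+-1}: equivalence relation on vertices.\<close>

definition bstep :: "('v, 'd, 'b) lgraph \<Rightarrow> 'b \<times> bool \<Rightarrow> 'v \<Rightarrow> 'v \<Rightarrow> bool" where
  "bstep G b u v \<longleftrightarrow> (\<exists>d\<in>darts G. lab G d \<in> {b, sinv b} \<and> init G d = u \<and> term_v G d = v)"

definition bcomp :: "('v, 'd, 'b) lgraph \<Rightarrow> 'b \<times> bool \<Rightarrow> ('v \<times> 'v) set" where
  "bcomp G b = {(u, v). u \<in> verts G \<and> v \<in> verts G \<and> (bstep G b)\<^sup>*\<^sup>* u v}"

definition nonb_darts :: "('v, 'd, 'b) lgraph \<Rightarrow> 'b \<times> bool \<Rightarrow> 'd set" where
  "nonb_darts G b = {d \<in> darts G. lab G d \<notin> {b, sinv b}}"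

end

theory Submission
  imports Defs
begin


lemma sinv_sinv[simp]: "sinv (sinv c) = c" by (simp add: sinv_def)
lemma sinv_neq[simp]: "sinv c \<noteq> c" "c \<noteq> sinv c" by (cases c; simp add: sinv_def)+
lemma sinv_inj[simp]: "(sinv c = sinv c') = (c = c')" by (metis sinv_sinv)

definition hom_ok :: "('v1,'d1,'b) lgraph \<Rightarrow> ('v2,'d2,'b) lgraph \<Rightarrow> ('v1\<Rightarrow>'v2) \<Rightarrow> ('d1\<Rightarrow>'d2) \<Rightarrow> ('v1 \<Rightarrow> 'r) \<Rightarrow> bool" where
  "hom_ok G0 G p q rho \<longleftrightarrow> verts G = p ` verts G0 \<and> darts G = q ` darts G0
    \<and> (\<forall>x\<in>darts G0. dinv G (q x) = q (dinv G0 x) \<and> init G (q x) = p (init G0 x) \<and> lab G (q x) = lab G0 x)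
    \<and> (\<forall>u\<in>verts G0. \<forall>v\<in>verts G0. p u = p v \<longrightarrow> rho u = rho v)"

definition det :: "('v1,'d1,'b) lgraph \<Rightarrow> ('v1 \<Rightarrow> 'r) \<Rightarrow> bool" where
  "det G0 rho \<longleftrightarrow> (\<forall>x\<in>darts G0. \<forall>y\<in>darts G0. lab G0 x = lab G0 y \<and> rho (init G0 x) = rho (init G0 y)
      \<longrightarrow> rho (term_v G0 x) = rho (term_v G0 y))"

lemma lg_facts:
  assumes "labeled_graph B G" "x \<in> darts G"
  shows "dinv G x \<in> darts G" "dinv G (dinv G x) = x" "init G x \<in> verts G" "term_v G x \<in> verts G"
    "lab G (dinv G x) = sinv (lab G x)" "term_v G (dinv G x) = init G x" "init G (dinv G x) = term_v G x"
    "lab G x \<in> signed B" "dinv G x \<noteq> x"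
  using assms unfolding labeled_graph_def term_v_def by auto

lemma hom_term:
  assumes "hom_ok G0 G p q rho" "labeled_graph B G0" "x \<in> darts G0"
  shows "term_v G (q x) = p (term_v G0 x)"
proof -
  have "dinv G0 x \<in> darts G0" using lg_facts assms by metis
  then show ?thesis using assms unfolding hom_ok_def term_v_def by auto
qed

lemma fold_step_hom:
  assumes F: "is_fold G G1 f1 g1" and H: "hom_ok G0 G p q rho" and L: "labeled_graph B G0" and D: "det G0 rho"
  shows "hom_ok G0 G1 (f1 \<circ> p) (g1 \<circ> q) rho"
proof -
  obtain d1 d2 where d12a: "d1 \<in> darts G" "d2 \<in> darts G" and C: "d1 \<noteq> d2 \<and> init G d1 = init G d2 \<and> lab G d1 = lab G d2
       \<and> verts G1 = f1 ` verts G \<and> darts G1 = g1 ` darts G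
       \<and> (\<forall>x\<in>darts G. dinv G1 (g1 x) = g1 (dinv G x) \<and> init G1 (g1 x) = f1 (init G x)
                         \<and> lab G1 (g1 x) = lab G x)
       \<and> (\<forall>x\<in>darts G. \<forall>y\<in>darts G. g1 x = g1 y \<longleftrightarrow>
             (x = y \<or> {x, y} = {d1, d2} \<or> {x, y} = {dinv G d1, dinv G d2}))
       \<and> (\<forall>u\<in>verts G. \<forall>v\<in>verts G. f1 u = f1 v \<longleftrightarrow>
             (u = v \<or> {u, v} = {term_v G d1, term_v G d2}))"
    using F unfolding is_fold_def by - (elim bexE, rule that, assumption+)
  have d12: "d1 \<in> darts G" "d2 \<in> darts G" "init G d1 = init G d2" "lab G d1 = lab G d2"
    using d12a C by - (elim conjE, assumption)+
  have V: "verts G1 = f1 ` verts G" and Dr: "darts G1 = g1 ` darts G"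
    and hm: "\<forall>x\<in>darts G. dinv G1 (g1 x) = g1 (dinv G x) \<and> init G1 (g1 x) = f1 (init G x) \<and> lab G1 (g1 x) = lab G x"
    and fk: "\<forall>u\<in>verts G. \<forall>v\<in>verts G. f1 u = f1 v \<longleftrightarrow> (u = v \<or> {u, v} = {term_v G d1, term_v G d2})"
    using C by - (elim conjE, assumption)+
  have Vp: "verts G = p ` verts G0" and Dq: "darts G = q ` darts G0"
    and hq: "\<forall>x\<in>darts G0. dinv G (q x) = q (dinv G0 x) \<and> init G (q x) = p (init G0 x) \<and> lab G (q x) = lab G0 x"
    and kq: "\<forall>u\<in>verts G0. \<forall>v\<in>verts G0. p u = p v \<longrightarrow> rho u = rho v"
    using H unfolding hom_ok_def by - (elim conjE, assumption)+
  obtain x1 where x1: "x1 \<in> darts G0" "d1 = q x1" using d12(1) Dq by blast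
  obtain x2 where x2: "x2 \<in> darts G0" "d2 = q x2" using d12(2) Dq by blast
  have iv: "init G0 x1 \<in> verts G0" "init G0 x2 \<in> verts G0" "term_v G0 x1 \<in> verts G0" "term_v G0 x2 \<in> verts G0"
    using lg_facts(3,4)[OF L x1(1)] lg_facts(3,4)[OF L x2(1)] by simp_all
  have "p (init G0 x1) = p (init G0 x2)" using d12(3) hq x1 x2 by metis
  then have "rho (init G0 x1) = rho (init G0 x2)" using kq iv by blast
  moreover have "lab G0 x1 = lab G0 x2" using d12(4) hq x1 x2 by metis
  ultimately have rt: "rho (term_v G0 x1) = rho (term_v G0 x2)" using D x1 x2 unfolding det_def by blast
  have t1: "term_v G d1 = p (term_v G0 x1)" "term_v G d2 = p (term_v G0 x2)"
    using hom_term[OF H L] x1 x2 by auto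
  have k: "rho u = rho v" if u: "u \<in> verts G0" "v \<in> verts G0" "f1 (p u) = f1 (p v)" for u v
  proof -
    have pu: "p u \<in> verts G" "p v \<in> verts G" using u Vp by auto
    have "p u = p v \<or> {p u, p v} = {term_v G d1, term_v G d2}" using fk[rule_format, OF pu] u(3) by blast
    then have "p u = p v \<or> {p u, p v} = {p (term_v G0 x1), p (term_v G0 x2)}" unfolding t1 .
    then show ?thesis
    proof
      assume "p u = p v" then show ?thesis using kq[rule_format, OF u(1,2)] by blast
    next
      assume "{p u, p v} = {p (term_v G0 x1), p (term_v G0 x2)}"
      then have "(p u = p (term_v G0 x1) \<and> p v = p (term_v G0 x2)) \<or> (p u = p (term_v G0 x2) \<and> p v = p (term_v G0 x1))"
        by (simp add: doubleton_eq_iff)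
      then show ?thesis
      proof
        assume "p u = p (term_v G0 x1) \<and> p v = p (term_v G0 x2)"
        then have "rho u = rho (term_v G0 x1)" "rho v = rho (term_v G0 x2)"
          using kq[rule_format, OF u(1) iv(3)] kq[rule_format, OF u(2) iv(4)] by blast+
        then show ?thesis using rt by simp
      next
        assume "p u = p (term_v G0 x2) \<and> p v = p (term_v G0 x1)"
        then have "rho u = rho (term_v G0 x2)" "rho v = rho (term_v G0 x1)"
          using kq[rule_format, OF u(1) iv(4)] kq[rule_format, OF u(2) iv(3)] by blast+
        then show ?thesis using rt by simp
      qed
    qed
  qed
  have h: "dinv G1 (g1 (q x)) = g1 (q (dinv G0 x)) \<and> init G1 (g1 (q x)) = f1 (p (init G0 x)) \<and> lab G1 (g1 (q x)) = lab G0 x"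
    if "x \<in> darts G0" for x
  proof -
    have qx: "q x \<in> darts G" using that Dq by blast
    show ?thesis using hm[rule_format, OF qx] hq[rule_format, OF that] by simp
  qed
  have "verts G1 = (f1 \<circ> p) ` verts G0" using V Vp by (simp add: image_comp)
  moreover have "darts G1 = (g1 \<circ> q) ` darts G0" using Dr Dq by (simp add: image_comp)
  moreover have "\<forall>x\<in>darts G0. dinv G1 ((g1 \<circ> q) x) = (g1 \<circ> q) (dinv G0 x) \<and> init G1 ((g1 \<circ> q) x) = (f1 \<circ> p) (init G0 x) \<and> lab G1 ((g1 \<circ> q) x) = lab G0 x"
    using h by simp
  moreover have "\<forall>u\<in>verts G0. \<forall>v\<in>verts G0. (f1 \<circ> p) u = (f1 \<circ> p) v \<longrightarrow> rho u = rho v"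
  proof (intro ballI impI)
    fix u v assume "u \<in> verts G0" "v \<in> verts G0" "(f1 \<circ> p) u = (f1 \<circ> p) v"
    then show "rho u = rho v" using k[of u v] by simp
  qed
  ultimately show ?thesis unfolding hom_ok_def by (intro conjI)
qed

lemma folds_hom:
  assumes "folds_to G H f g" "hom_ok G0 G p q rho" "labeled_graph B G0" "det G0 rho"
  shows "hom_ok G0 H (f \<circ> p) (g \<circ> q) rho"
  using assms
proof (induction arbitrary: p q rule: folds_to.induct)
  case (refl G) then show ?case by simp
next
  case (step G G1 f1 g1 H f2 g2)
  have "hom_ok G0 G1 (f1 \<circ> p) (g1 \<circ> q) rho" using fold_step_hom step by blast
  then have "hom_ok G0 H (f2 \<circ> (f1 \<circ> p)) (g2 \<circ> (g1 \<circ> q)) rho" using step by blast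
  then show ?case by (simp only: o_assoc)
qed

lemma folds_hom0:
  assumes "folds_to G0 H f g" "labeled_graph B G0" "det G0 rho"
  shows "hom_ok G0 H f g rho"
proof -
  have "hom_ok G0 G0 id id rho" unfolding hom_ok_def by auto
  then show ?thesis using folds_hom[OF assms(1) _ assms(2,3)] by fastforce
qed

lemma hom_lg:
  assumes H: "hom_ok G0 T f g rho" and L: "labeled_graph B G0"
  shows "labeled_graph B T"
  unfolding labeled_graph_def
proof
  fix D assume "D \<in> darts T"
  then obtain x where x: "x \<in> darts G0" "D = g x" using H unfolding hom_ok_def by auto
  have dx: "dinv G0 x \<in> darts G0" "dinv G0 (dinv G0 x) = x" "lab G0 (dinv G0 x) = sinv (lab G0 x)"
     "init G0 x \<in> verts G0" "lab G0 x \<in> signed B"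
    using lg_facts[OF L x(1)] by auto
  show "dinv T D \<in> darts T \<and> dinv T (dinv T D) = D \<and> dinv T D \<noteq> D \<and> init T D \<in> verts T \<and> lab T D \<in> signed B
        \<and> lab T (dinv T D) = sinv (lab T D)"
    using H x dx unfolding hom_ok_def by (metis image_eqI sinv_neq(1))
qed

lemma bstep_sym:
  assumes "labeled_graph B G" "bstep G b u v" shows "bstep G b v u"
proof -
  obtain d where d: "d \<in> darts G" "lab G d \<in> {b, sinv b}" "init G d = u" "term_v G d = v"
    using assms unfolding bstep_def by blast
  show ?thesis unfolding bstep_def
    by (rule bexI[of _ "dinv G d"]) (use lg_facts[OF assms(1) d(1)] d in auto)
qed

lemma bcomp_equiv:
  assumes "labeled_graph B G" shows "equiv (verts G) (bcomp G b)"
proof -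
  have s: "symp (bstep G b)" by (rule sympI) (rule bstep_sym[OF assms])
  show ?thesis unfolding equiv_def refl_on_def sym_def trans_def bcomp_def
    using sympD[OF symp_rtranclp[OF s]] by (auto intro: rtranclp_trans)
qed




lemma sinv_eq_iff: "sinv c = d \<longleftrightarrow> c = sinv d" by (metis sinv_sinv)

locale whs =
  fixes B :: "'b set" and b :: "'b \<times> bool" and A :: "('b \<times> bool) set" and S :: "('v, 'd, 'b) lgraph"
  assumes lgS: "labeled_graph B S" and tS: "tight S" and ew: "elementary_whitehead B b A"
begin

abbreviation w where "w \<equiv> wh_word b A"
abbreviation G0 where "G0 \<equiv> subdiv w S"

lemma bA: "b \<in> signed B" "sinv b \<in> signed B" "\<And>c. c \<in> A \<Longrightarrow> c \<in> signed B \<and> c \<noteq> b \<and> c \<noteq> sinv b"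
  using ew unfolding elementary_whitehead_def signed_def sinv_def by auto

lemma sA: "sinv c \<in> A \<Longrightarrow> c \<noteq> b \<and> c \<noteq> sinv b"
  using bA(3)[of "sinv c"] by (auto simp: sinv_eq_iff)

lemma w_b: "w b = [b]" "w (sinv b) = [sinv b]" by (simp_all add: wh_word_def)

lemma w_nonb: "c \<noteq> b \<Longrightarrow> c \<noteq> sinv b \<Longrightarrow>
   w c = (if c \<in> A then [b] else []) @ [c] @ (if sinv c \<in> A then [sinv b] else [])"
  by (simp add: wh_word_def)

lemma w_sinv: "w (sinv c) = map sinv (rev (w c))"
proof (cases "c = b \<or> c = sinv b")
  case True then show ?thesis by (auto simp: wh_word_def)
next
  case False
  then have "sinv c \<noteq> b" "sinv c \<noteq> sinv b" by (auto simp: sinv_eq_iff)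
  then show ?thesis using False by (simp add: w_nonb)
qed

lemma len_w_sinv[simp]: "length (w (sinv c)) = length (w c)"
  by (simp add: w_sinv)

lemma len_w_pos: "0 < length (w c)"
  by (simp add: wh_word_def)

lemma nth_w_sinv: "i < length (w c) \<Longrightarrow> w (sinv c) ! (length (w c) - 1 - i) = sinv (w c ! i)"
  by (simp add: w_sinv rev_nth)

lemma set_w: "c \<in> signed B \<Longrightarrow> set (w c) \<subseteq> signed B"
  using bA by (auto simp: wh_word_def)

lemma w_pos:
  assumes "c \<noteq> b" "c \<noteq> sinv b" "i < length (w c)"
  shows "(i = (if c \<in> A then 1 else 0) \<and> w c ! i = c)
       \<or> (c \<in> A \<and> i = 0 \<and> w c ! i = b \<and> 2 \<le> length (w c))
       \<or> (sinv c \<in> A \<and> i = length (w c) - 1 \<and> 0 < i \<and> i \<noteq> (if c \<in> A then 1 else 0) \<and> w c ! i = sinv b)"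
  using assms
  by (cases "c \<in> A"; cases "sinv c \<in> A"; cases i; cases "i - 1"; simp add: w_nonb)

lemma pos_c:
  assumes "c \<noteq> b" "c \<noteq> sinv b"
  shows "(i < length (w c) \<and> w c ! i = c) \<longleftrightarrow> i = (if c \<in> A then 1 else 0)"
  using assms
  by (cases "c \<in> A"; cases "sinv c \<in> A"; cases i; cases "i - 1"; auto simp add: w_nonb)

lemma sub_idx_nonb: "c \<noteq> b \<Longrightarrow> c \<noteq> sinv b \<Longrightarrow> sub_idx b A c = (if c \<in> A then 1 else 0)"
  unfolding sub_idx_def using pos_c by blast

lemma len_nonb: "c \<noteq> b \<Longrightarrow> c \<noteq> sinv b \<Longrightarrow> length (w c) = (if c \<in> A then 1 else 0) + 1 + (if sinv c \<in> A then 1 else 0)"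
  by (simp add: w_nonb)

lemmas sf = lg_facts[OF lgS]

lemma tight_eq: "d1 \<in> darts S \<Longrightarrow> d2 \<in> darts S \<Longrightarrow> init S d1 = init S d2 \<Longrightarrow> lab S d1 = lab S d2 \<Longrightarrow> d1 = d2"
  using tS unfolding tight_def by blast

lemma G0_simps:
  "darts G0 = {(d, i). d \<in> darts S \<and> i < length (w (lab S d))}"
  "init G0 (d, i) = (if i = 0 then Inl (init S d) else Inr {(d, i), (dinv S d, length (w (lab S d)) - i)})"
  "dinv G0 (d, i) = (dinv S d, length (w (lab S d)) - 1 - i)"
  "lab G0 (d, i) = w (lab S d) ! i"
  "verts G0 = Inl ` verts S \<union>
         {Inr {(d, k), (dinv S d, length (w (lab S d)) - k)} | d k.
            d \<in> darts S \<and> 0 < k \<and> k < length (w (lab S d))}"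
  by (simp_all add: subdiv_def)

lemma G0_term: "d \<in> darts S \<Longrightarrow> term_v G0 (d, i) = init G0 (dinv S d, length (w (lab S d)) - 1 - i)"
  by (simp add: term_v_def G0_simps(3))

lemma G0_mid: "d \<in> darts S \<Longrightarrow> 0 < i \<Longrightarrow> i < length (w (lab S d)) \<Longrightarrow>
    init G0 (d, i) = init G0 (dinv S d, length (w (lab S d)) - i)"
  using sf[of d] by (auto simp: G0_simps(2))

lemma lgG0: "labeled_graph B G0"
  unfolding labeled_graph_def
proof
  fix x assume x: "x \<in> darts G0"
  obtain d i where di: "x = (d, i)" "d \<in> darts S" "i < length (w (lab S d))" using x by (auto simp: G0_simps(1))
  note s = sf[OF di(2)]
  have "w (lab S d) ! i \<in> set (w (lab S d))" using di by simp
  then have lb: "w (lab S d) ! i \<in> signed B" using set_w[OF s(8)] by blast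
  have iv: "init G0 (d, i) \<in> verts G0"
  proof (cases "i = 0")
    case True then show ?thesis using s(3) di by (simp add: G0_simps(2,5))
  next
    case False
    then have "Inr {(d, i), (dinv S d, length (w (lab S d)) - i)} \<in> verts G0"
      unfolding G0_simps(5) using di by blast
    then show ?thesis using False by (simp add: G0_simps(2))
  qed
  show "dinv G0 x \<in> darts G0 \<and> dinv G0 (dinv G0 x) = x \<and> dinv G0 x \<noteq> x \<and> init G0 x \<in> verts G0 \<and>
        lab G0 x \<in> signed B \<and> lab G0 (dinv G0 x) = sinv (lab G0 x)"
  proof (intro conjI)
    have n: "length (w (lab S (dinv S d))) = length (w (lab S d))" using s(5) by simp
    show "dinv G0 x \<in> darts G0" using di s(1) n by (simp add: G0_simps(1,3))
    show "dinv G0 (dinv G0 x) = x" using di s(2) n by (simp add: G0_simps(3))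
    show "dinv G0 x \<noteq> x" using di sf(9)[OF di(2)] by (auto simp: G0_simps(3))
    show "init G0 x \<in> verts G0" using iv di by simp
    show "lab G0 x \<in> signed B" using lb di by (simp add: G0_simps(4))
    show "lab G0 (dinv G0 x) = sinv (lab G0 x)" using di s(5) nth_w_sinv[of i "lab S d"] by (simp add: G0_simps(3,4))
  qed
qed

definition nxt :: "'v \<Rightarrow> 'v + 'v" where
  "nxt u = (if \<exists>d\<in>darts S. init S d = u \<and> lab S d = b
            then Inl (term_v S (SOME d. d \<in> darts S \<and> init S d = u \<and> lab S d = b)) else Inr u)"

definition rho :: "'v + ('d \<times> nat) set \<Rightarrow> 'v + 'v" where
  "rho z = (case z of Inl v \<Rightarrow> Inl v
     | Inr X \<Rightarrow> nxt (init S (fst (SOME p. p \<in> X \<and> snd p = 1 \<and> lab S (fst p) \<in> A))))"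

definition prj :: "'v + 'v \<Rightarrow> 'v" where
  "prj z = (case z of Inl v \<Rightarrow> v | Inr u \<Rightarrow> u)"

lemma nxt_b: assumes "d \<in> darts S" "lab S d = b" shows "nxt (init S d) = Inl (term_v S d)"
proof -
  let ?P = "\<lambda>e. e \<in> darts S \<and> init S e = init S d \<and> lab S e = b"
  have "?P d" using assms by simp
  then have "?P (SOME e. ?P e)" by (rule someI)
  then have "(SOME e. ?P e) = d" using tight_eq assms by metis
  then show ?thesis unfolding nxt_def using assms by auto
qed

lemma nxt_none: "\<not> (\<exists>d\<in>darts S. init S d = u \<and> lab S d = b) \<Longrightarrow> nxt u = Inr u"
  unfolding nxt_def by simp

lemma nxt_inj: assumes "nxt u = nxt u'" shows "u = u'"
proof (cases "\<exists>d\<in>darts S. init S d = u \<and> lab S d = b")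
  case True
  then obtain d where d: "d \<in> darts S" "init S d = u" "lab S d = b" by blast
  show ?thesis
  proof (cases "\<exists>d\<in>darts S. init S d = u' \<and> lab S d = b")
    case True
    then obtain d' where d': "d' \<in> darts S" "init S d' = u'" "lab S d' = b" by blast
    have "Inl (term_v S d) = (Inl (term_v S d') :: 'v + 'v)"
      using assms nxt_b[OF d(1,3)] nxt_b[OF d'(1,3)] d(2) d'(2) by metis
    then have t: "term_v S d = term_v S d'" by simp
    have "init S (dinv S d) = init S (dinv S d')" using t sf(7)[OF d(1)] sf(7)[OF d'(1)] by metis
    moreover have "lab S (dinv S d) = lab S (dinv S d')" using sf(5)[OF d(1)] sf(5)[OF d'(1)] d(3) d'(3) by metis
    ultimately have "dinv S d = dinv S d'" using tight_eq sf(1)[OF d(1)] sf(1)[OF d'(1)] by blast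
    then have "d = d'" using sf(2)[OF d(1)] sf(2)[OF d'(1)] by metis
    then show ?thesis using d d' by simp
  next
    case False
    then show ?thesis using assms nxt_b[OF d(1,3)] nxt_none[OF False] d(2) by simp
  qed
next
  case False
  show ?thesis
  proof (cases "\<exists>d\<in>darts S. init S d = u' \<and> lab S d = b")
    case True
    then obtain d' where d': "d' \<in> darts S" "init S d' = u'" "lab S d' = b" by blast
    then show ?thesis using assms nxt_b[OF d'(1,3)] nxt_none[OF False] by simp
  next
    case False2: False
    then show ?thesis using assms nxt_none[OF False] nxt_none[OF False2] by simp
  qed
qed

lemma nxt_comp: assumes "u \<in> verts S" shows "(u, prj (nxt u)) \<in> bcomp S b"
proof (cases "\<exists>d\<in>darts S. init S d = u \<and> lab S d = b")
  case True
  then obtain d where d: "d \<in> darts S" "init S d = u" "lab S d = b" by blast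
  have "bstep S b u (term_v S d)" unfolding bstep_def using d by auto
  then show ?thesis using nxt_b[OF d(1,3)] d sf[OF d(1)] assms unfolding bcomp_def prj_def by auto
next
  case False
  then show ?thesis using nxt_none assms unfolding bcomp_def prj_def by auto
qed

lemma rho_mid: assumes d: "d \<in> darts S" "lab S d \<in> A" shows "rho (init G0 (d, 1)) = nxt (init S d)"
proof -
  let ?c = "lab S d" let ?n = "length (w ?c)"
  have nb: "?c \<noteq> b" "?c \<noteq> sinv b" using bA(3) d by auto
  have n: "?n = 2 + (if sinv ?c \<in> A then 1 else 0)" using len_nonb[OF nb] d by simp
  have X: "init G0 (d, 1) = Inr {(d, 1), (dinv S d, ?n - 1)}" by (simp add: G0_simps(2))
  let ?P = "\<lambda>p. p \<in> {(d, 1), (dinv S d, ?n - 1)} \<and> snd p = 1 \<and> lab S (fst p) \<in> A"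
  have "?P (d, 1)" using d by simp
  moreover have "p = (d, 1)" if "?P p" for p
  proof (rule ccontr)
    assume "p \<noteq> (d, 1)"
    then have "p = (dinv S d, ?n - 1)" "?n - 1 = 1" "lab S (dinv S d) \<in> A" using that by auto
    then show False using n sf(5)[OF d(1)] by (auto split: if_splits)
  qed
  ultimately have "(SOME p. ?P p) = (d, 1)" by (rule some_equality)
  then show ?thesis unfolding X rho_def by simp
qed

end


context whs begin

lemma rho_Inl[simp]: "rho (Inl v) = Inl v" by (simp add: rho_def)

lemma cls:
  assumes x: "x \<in> darts G0"
  shows "(lab G0 x = b \<and> (\<exists>u\<in>verts S. rho (init G0 x) = Inl u \<and> rho (term_v G0 x) = nxt u))
   \<or> (lab G0 x = sinv b \<and> (\<exists>u\<in>verts S. rho (init G0 x) = nxt u \<and> rho (term_v G0 x) = Inl u))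
   \<or> (lab G0 x \<notin> {b, sinv b} \<and> fst x \<in> nonb_darts S b \<and> snd x = sub_idx b A (lab S (fst x))
      \<and> lab G0 x = lab S (fst x)
      \<and> rho (init G0 x) = (if lab S (fst x) \<in> A then nxt (init S (fst x)) else Inl (init S (fst x))))"
proof -
  obtain d i where di: "x = (d, i)" "d \<in> darts S" "i < length (w (lab S d))" using x by (auto simp: G0_simps(1))
  note s = sf[OF di(2)]
  define c where "c = lab S d"
  define n where "n = length (w c)"
  have ns: "length (w (lab S (dinv S d))) = n" using s(5) unfolding n_def c_def by simp
  have tm: "term_v G0 (d, i) = init G0 (dinv S d, n - 1 - i)" using G0_term[OF di(2)] unfolding n_def c_def by simp
  have ldd: "lab S (dinv S d) = sinv c" using s(5) c_def by simp
  show ?thesis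
  proof (cases "c = b")
    case True
    then have "n = 1" "i = 0" using di(3) unfolding n_def c_def by (simp_all add: w_b)
    moreover have "nxt (init S d) = Inl (term_v S d)" using nxt_b[OF di(2)] True c_def by simp
    ultimately have l: "lab G0 x = b" "init G0 x = Inl (init S d)" "term_v G0 x = Inl (term_v S d)"
      "nxt (init S d) = Inl (term_v S d)"
      using di(1) tm True s(7) unfolding c_def by (simp_all add: G0_simps(2,4) w_b)
    have "\<exists>u\<in>verts S. rho (init G0 x) = Inl u \<and> rho (term_v G0 x) = nxt u"
      using l s(3) by auto
    then show ?thesis using l(1) by blast
  next
    case nb1: False
    show ?thesis
    proof (cases "c = sinv b")
      case True
      then have "n = 1" "i = 0" using di(3) unfolding n_def c_def by (simp_all add: w_b)
      moreover have "nxt (term_v S d) = Inl (init S d)"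
      proof -
        have "lab S (dinv S d) = b" using ldd True by simp
        then have "nxt (init S (dinv S d)) = Inl (term_v S (dinv S d))" by (rule nxt_b[OF s(1)])
        then show ?thesis unfolding s(6,7) .
      qed
      ultimately have l: "lab G0 x = sinv b" "init G0 x = Inl (init S d)" "term_v G0 x = Inl (term_v S d)"
        using di(1) tm True s(7) unfolding c_def by (simp_all add: G0_simps(2,4) w_b)
      have "\<exists>u\<in>verts S. rho (init G0 x) = nxt u \<and> rho (term_v G0 x) = Inl u"
        using l(2,3) s(4) \<open>nxt (term_v S d) = Inl (init S d)\<close> by auto
      then show ?thesis using l(1) by blast
    next
      case nb2: False
      have dnb: "d \<in> nonb_darts S b" using di nb1 nb2 unfolding nonb_darts_def c_def by simp
      have si: "sub_idx b A c = (if c \<in> A then 1 else 0)" using sub_idx_nonb nb1 nb2 by simp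
      have ln: "n = (if c \<in> A then 1 else 0) + 1 + (if sinv c \<in> A then 1 else 0)"
        using len_nonb nb1 nb2 unfolding n_def by simp
      have "(i = (if c \<in> A then 1 else 0) \<and> w c ! i = c)
       \<or> (c \<in> A \<and> i = 0 \<and> w c ! i = b \<and> 2 \<le> length (w c))
       \<or> (sinv c \<in> A \<and> i = length (w c) - 1 \<and> 0 < i \<and> i \<noteq> (if c \<in> A then 1 else 0) \<and> w c ! i = sinv b)"
        using w_pos[OF nb1 nb2] di(3) c_def by simp
      then consider (mid) "i = (if c \<in> A then 1 else 0)" "w c ! i = c"
        | (pre) "c \<in> A" "i = 0" "w c ! i = b" "2 \<le> n"
        | (suf) "sinv c \<in> A" "i = n - 1" "0 < i" "w c ! i = sinv b"
        unfolding n_def by blast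
      then show ?thesis
      proof cases
        case mid
        have "rho (init G0 (d, i)) = (if c \<in> A then nxt (init S d) else Inl (init S d))"
        proof (cases "c \<in> A")
          case True then show ?thesis using rho_mid[OF di(2)] mid c_def by simp
        next
          case False then show ?thesis using mid by (simp add: G0_simps(2) rho_def)
        qed
        then show ?thesis using mid di dnb si nb1 nb2 unfolding c_def by (simp add: G0_simps(4))
      next
        case pre
        have "term_v G0 (d, i) = init G0 (dinv S d, n - 1)" using tm pre by simp
        also have "\<dots> = init G0 (d, 1)"
          using G0_mid[OF s(1), of "n - 1"] pre ns s(2) by simp
        finally have "rho (term_v G0 (d, i)) = nxt (init S d)" using rho_mid[OF di(2)] pre c_def by simp
        then show ?thesis using pre di s(3) c_def by (simp add: G0_simps(2,4))
      next
        case suf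
        have sA: "lab S (dinv S d) \<in> A" using ldd suf by simp
        have "init G0 (d, i) = init G0 (dinv S d, 1)"
          using G0_mid[OF di(2), of i] suf di(3) unfolding n_def c_def by simp
        then have r1: "rho (init G0 (d, i)) = nxt (term_v S d)" using rho_mid[OF s(1) sA] s(7) by simp
        have "term_v G0 (d, i) = Inl (term_v S d)" using tm suf s(7) by (simp add: G0_simps(2))
        then show ?thesis using r1 suf di s(4) c_def by (simp add: G0_simps(4))
      qed
    qed
  qed
qed

end


context whs begin

lemma nonb_eq:
  assumes x: "x \<in> darts G0" and y: "y \<in> darts G0" and l: "lab G0 x = lab G0 y" and nb: "lab G0 x \<notin> {b, sinv b}"
    and r: "rho (init G0 x) = rho (init G0 y)"
  shows "x = y"
proof -
  have nby: "lab G0 y \<notin> {b, sinv b}" using l nb by simp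
  have cx: "fst x \<in> nonb_darts S b \<and> snd x = sub_idx b A (lab S (fst x)) \<and> lab G0 x = lab S (fst x)
      \<and> rho (init G0 x) = (if lab S (fst x) \<in> A then nxt (init S (fst x)) else Inl (init S (fst x)))"
    using cls[OF x] nb by auto
  have cy: "fst y \<in> nonb_darts S b \<and> snd y = sub_idx b A (lab S (fst y)) \<and> lab G0 y = lab S (fst y)
      \<and> rho (init G0 y) = (if lab S (fst y) \<in> A then nxt (init S (fst y)) else Inl (init S (fst y)))"
    using cls[OF y] nby by auto
  have lc: "lab S (fst x) = lab S (fst y)" using cx cy l by simp
  have "init S (fst x) = init S (fst y)"
  proof (cases "lab S (fst x) \<in> A")
    case True
    then have "nxt (init S (fst x)) = nxt (init S (fst y))" using cx cy r lc by simp
    then show ?thesis by (rule nxt_inj)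
  next
    case False
    then show ?thesis using cx cy r lc by simp
  qed
  then have "fst x = fst y" using tight_eq lc cx cy unfolding nonb_darts_def by blast
  moreover have "snd x = snd y" using cx cy lc \<open>fst x = fst y\<close> by simp
  ultimately show ?thesis by (rule prod_eqI)
qed

lemma detG0: "det G0 rho"
  unfolding det_def
proof (intro ballI impI)
  fix x y assume x: "x \<in> darts G0" and y: "y \<in> darts G0"
    and h: "lab G0 x = lab G0 y \<and> rho (init G0 x) = rho (init G0 y)"
  show "rho (term_v G0 x) = rho (term_v G0 y)"
  proof (cases "lab G0 x = b")
    case True
    obtain u where u: "rho (init G0 x) = Inl u" "rho (term_v G0 x) = nxt u" using cls[OF x] True by auto
    obtain u' where u': "rho (init G0 y) = Inl u'" "rho (term_v G0 y) = nxt u'" using cls[OF y] True h by auto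
    show ?thesis using u u' h by simp
  next
    case nb: False
    show ?thesis
    proof (cases "lab G0 x = sinv b")
      case True
      then have ny: "lab G0 y = sinv b" using h by simp
      obtain u where u: "rho (init G0 x) = nxt u" "rho (term_v G0 x) = Inl u" using cls[OF x] True by auto
      obtain u' where u': "rho (init G0 y) = nxt u'" "rho (term_v G0 y) = Inl u'" using cls[OF y] ny by auto
      have "nxt u = nxt u'" using u(1) u'(1) h by simp
      then have "u = u'" by (rule nxt_inj)
      then show ?thesis using u u' by simp
    next
      case False
      then have "x = y" using nonb_eq[OF x y] h nb by blast
      then show ?thesis by simp
    qed
  qed
qed

lemma kap:
  assumes x: "x \<in> darts G0" and l: "lab G0 x \<in> {b, sinv b}"
  shows "bcomp S b `` {prj (rho (init G0 x))} = bcomp S b `` {prj (rho (term_v G0 x))}"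
proof -
  have eq: "equiv (verts S) (bcomp S b)" by (rule bcomp_equiv[OF lgS])
  obtain u where u: "u \<in> verts S" "(prj (rho (init G0 x)) = u \<and> prj (rho (term_v G0 x)) = prj (nxt u))
      \<or> (prj (rho (init G0 x)) = prj (nxt u) \<and> prj (rho (term_v G0 x)) = u)"
    using cls[OF x] l unfolding prj_def by auto
  have "(u, prj (nxt u)) \<in> bcomp S b" by (rule nxt_comp[OF u(1)])
  then have "bcomp S b `` {u} = bcomp S b `` {prj (nxt u)}" using eq by (simp add: equiv_class_eq_iff)
  then show ?thesis using u(2) by auto
qed

lemma L2:
  assumes a: "a \<in> verts G0"
  shows "\<exists>v\<in>verts S. a = Inl v \<or> (\<exists>y\<in>darts G0. lab G0 y = b \<and> init G0 y = Inl v \<and> term_v G0 y = a)"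
proof -
  have "a \<in> Inl ` verts S \<or> (\<exists>d k. a = Inr {(d, k), (dinv S d, length (w (lab S d)) - k)} \<and>
            d \<in> darts S \<and> 0 < k \<and> k < length (w (lab S d)))"
    using a unfolding G0_simps(5) by blast
  then show ?thesis
  proof
    assume "a \<in> Inl ` verts S" then show ?thesis by blast
  next
    assume "\<exists>d k. a = Inr {(d, k), (dinv S d, length (w (lab S d)) - k)} \<and>
            d \<in> darts S \<and> 0 < k \<and> k < length (w (lab S d))"
    then obtain d k where dk: "a = Inr {(d, k), (dinv S d, length (w (lab S d)) - k)}"
      "d \<in> darts S" "0 < k" "k < length (w (lab S d))" by blast
    note s = sf[OF dk(2)]
    define c where "c = lab S d"
    define n where "n = length (w c)"
    have ai: "a = init G0 (d, k)" using dk(1,3) by (simp add: G0_simps(2))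
    have nb1: "c \<noteq> b"
    proof
      assume "c = b" then show False using dk(3,4) unfolding c_def by (simp add: w_b)
    qed
    have nb2: "c \<noteq> sinv b"
    proof
      assume "c = sinv b" then show False using dk(3,4) unfolding c_def by (simp add: w_b)
    qed
    have "(k = (if c \<in> A then 1 else 0) \<and> w c ! k = c)
       \<or> (c \<in> A \<and> k = 0 \<and> w c ! k = b \<and> 2 \<le> length (w c))
       \<or> (sinv c \<in> A \<and> k = length (w c) - 1 \<and> 0 < k \<and> k \<noteq> (if c \<in> A then 1 else 0) \<and> w c ! k = sinv b)"
      using w_pos[OF nb1 nb2] dk(4) c_def by simp
    then consider (mid) "c \<in> A" "k = 1" | (suf) "sinv c \<in> A" "k = n - 1"
      using dk(3) unfolding n_def by (auto split: if_splits)
    then show ?thesis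
    proof cases
      case mid
      have y: "(d, 0) \<in> darts G0" "lab G0 (d, 0) = b" "init G0 (d, 0) = Inl (init S d)"
        using dk(2,4) mid len_nonb[OF nb1 nb2] w_nonb[OF nb1 nb2] unfolding c_def
        by (simp_all add: G0_simps(1,2,4))
      have "term_v G0 (d, 0) = init G0 (dinv S d, length (w (lab S d)) - 1)"
        using G0_term[OF dk(2)] by simp
      also have "\<dots> = init G0 (d, 1)"
        using G0_mid[OF s(1), of "length (w (lab S d)) - 1"] dk(3,4) mid s(2,5) by simp
      finally have "term_v G0 (d, 0) = a" using ai mid by simp
      then show ?thesis using y s(3) by blast
    next
      case suf
      have ld: "lab S (dinv S d) = sinv c" using s(5) c_def by simp
      have nbs1: "sinv c \<noteq> b" "sinv c \<noteq> sinv b" using nb1 nb2 by (auto simp: sinv_eq_iff)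
      have y: "(dinv S d, 0) \<in> darts G0" "lab G0 (dinv S d, 0) = b" "init G0 (dinv S d, 0) = Inl (term_v S d)"
        using s(1,7) ld suf w_nonb[OF nbs1] len_w_pos[of "sinv c"]
        by (simp_all add: G0_simps(1,2,4))
      have "term_v G0 (dinv S d, 0) = init G0 (d, n - 1)"
        using G0_term[OF s(1), of 0] ld s(2) unfolding n_def by simp
      then have "term_v G0 (dinv S d, 0) = a" using ai suf by simp
      then show ?thesis using y s(4) by blast
    qed
  qed
qed

lemma L3:
  assumes d: "d \<in> darts S" "lab S d \<in> {b, sinv b}"
  shows "(d, 0) \<in> darts G0 \<and> lab G0 (d, 0) = lab S d \<and> init G0 (d, 0) = Inl (init S d)
       \<and> term_v G0 (d, 0) = Inl (term_v S d)"
proof -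
  note s = sf[OF d(1)]
  have n0: "length (w (lab S d)) = 1 \<and> w (lab S d) ! 0 = lab S d"
  proof (cases "lab S d = b")
    case True then show ?thesis by (simp add: w_b)
  next
    case False then have "lab S d = sinv b" using d(2) by simp
    then show ?thesis by (simp add: w_b)
  qed
  have n: "length (w (lab S d)) = 1" "length (w (lab S (dinv S d))) = 1" using n0 s(5) by simp_all
  have "w (lab S d) ! 0 = lab S d" using n0 by simp
  moreover have "term_v G0 (d, 0) = Inl (term_v S d)" using G0_term[OF d(1), of 0] n s(7) by (simp add: G0_simps(2))
  ultimately show ?thesis using d n by (simp add: G0_simps(1,2,4))
qed

lemma L4:
  assumes d: "d \<in> nonb_darts S b" and i_def: "i = sub_idx b A (lab S d)"
  shows "(d, i) \<in> darts G0 \<and> lab G0 (d, i) = lab S d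
     \<and> dinv G0 (d, i) = (dinv S d, sub_idx b A (lab S (dinv S d)))
     \<and> ((i = 0 \<and> init G0 (d, i) = Inl (init S d))
        \<or> ((d, 0) \<in> darts G0 \<and> lab G0 (d, 0) = b \<and> init G0 (d, 0) = Inl (init S d) \<and> term_v G0 (d, 0) = init G0 (d, i)))"
proof -
  have dS: "d \<in> darts S" and nb1: "lab S d \<noteq> b" and nb2: "lab S d \<noteq> sinv b" using d unfolding nonb_darts_def by auto
  note s = sf[OF dS]
  define c where "c = lab S d"
  have nbs: "sinv c \<noteq> b" "sinv c \<noteq> sinv b" using nb1 nb2 c_def by (auto simp: sinv_eq_iff)
  have ic: "i = (if c \<in> A then 1 else 0)" using sub_idx_nonb[OF nb1 nb2] unfolding i_def c_def by simp
  have isc: "sub_idx b A (lab S (dinv S d)) = (if sinv c \<in> A then 1 else 0)"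
    using sub_idx_nonb[OF nbs] s(5) c_def by simp
  have n: "length (w c) = (if c \<in> A then 1 else 0) + 1 + (if sinv c \<in> A then 1 else 0)"
    using len_nonb[OF nb1 nb2] c_def by simp
  have wc: "w c ! i = c" using pos_c[OF nb1 nb2, of i] ic c_def by simp
  have c1: "(d, i) \<in> darts G0" using dS n ic c_def by (simp add: G0_simps(1))
  have c2: "lab G0 (d, i) = lab S d" using wc c_def by (simp add: G0_simps(4))
  have c3: "dinv G0 (d, i) = (dinv S d, sub_idx b A (lab S (dinv S d)))"
    using isc n ic c_def by (simp add: G0_simps(3))
  have c4: "((i = 0 \<and> init G0 (d, i) = Inl (init S d))
        \<or> ((d, 0) \<in> darts G0 \<and> lab G0 (d, 0) = b \<and> init G0 (d, 0) = Inl (init S d) \<and> term_v G0 (d, 0) = init G0 (d, i)))"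
  proof (cases "c \<in> A")
    case False
    then show ?thesis using ic by (simp add: G0_simps(2))
  next
    case True
    have y: "(d, 0) \<in> darts G0" "lab G0 (d, 0) = b" "init G0 (d, 0) = Inl (init S d)"
      using dS True n w_nonb[OF nb1 nb2] unfolding c_def by (simp_all add: G0_simps(1,2,4))
    have "term_v G0 (d, 0) = init G0 (dinv S d, length (w (lab S d)) - 1)"
      using G0_term[OF dS] by simp
    also have "\<dots> = init G0 (d, 1)"
      using G0_mid[OF s(1), of "length (w (lab S d)) - 1"] n True s(2,5) c_def by simp
    finally show ?thesis using y ic True by simp
  qed
  show ?thesis using c1 c2 c3 c4 by blast
qed

lemmas L4' = L4[OF _ HOL.refl]

end


context whs begin

lemma main:
  assumes tt: "is_tightening G0 T f g"
  shows "bij_betw (\<lambda>d. g (d, sub_idx b A (lab S d))) (nonb_darts S b) (nonb_darts T b)"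
    and "\<exists>\<Phi>. bij_betw \<Phi> (verts S // bcomp S b) (verts T // bcomp T b)
          \<and> (\<forall>v\<in>verts S. \<Phi> (bcomp S b `` {v}) = bcomp T b `` {f (Inl v)})
          \<and> (\<forall>d\<in>nonb_darts S b.
               let d' = g (d, sub_idx b A (lab S d)) in
                 lab T d' = lab S d
               \<and> dinv T d' = g (dinv S d, sub_idx b A (lab S (dinv S d)))
               \<and> \<Phi> (bcomp S b `` {init S d}) = bcomp T b `` {init T d'})"
proof -
  have ft: "folds_to G0 T f g" using tt unfolding is_tightening_def by blast
  have H: "hom_ok G0 T f g rho" by (rule folds_hom0[OF ft lgG0 detG0])
  have VT: "verts T = f ` verts G0" and DT: "darts T = g ` darts G0"
    and hq: "\<forall>x\<in>darts G0. dinv T (g x) = g (dinv G0 x) \<and> init T (g x) = f (init G0 x) \<and> lab T (g x) = lab G0 x"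
    and kq: "\<forall>u\<in>verts G0. \<forall>v\<in>verts G0. f u = f v \<longrightarrow> rho u = rho v"
    using H unfolding hom_ok_def by - (elim conjE, assumption)+
  have hx: "dinv T (g x) = g (dinv G0 x)" "init T (g x) = f (init G0 x)" "lab T (g x) = lab G0 x"
    "term_v T (g x) = f (term_v G0 x)" "g x \<in> darts T"
    if "x \<in> darts G0" for x
    using hq that hom_term[OF H lgG0 that] DT by auto
  have lgT: "labeled_graph B T" by (rule hom_lg[OF H lgG0])
  have eqS: "equiv (verts S) (bcomp S b)" by (rule bcomp_equiv[OF lgS])
  have eqT: "equiv (verts T) (bcomp T b)" by (rule bcomp_equiv[OF lgT])
  have g0: "x \<in> darts G0 \<Longrightarrow> init G0 x \<in> verts G0 \<and> term_v G0 x \<in> verts G0" for x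
    using lg_facts[OF lgG0] by blast
  have fv: "a \<in> verts G0 \<Longrightarrow> f a \<in> verts T" for a using VT by blast
  have inlv: "v \<in> verts S \<Longrightarrow> Inl v \<in> verts G0" for v by (simp add: G0_simps(5))

  show "bij_betw (\<lambda>d. g (d, sub_idx b A (lab S d))) (nonb_darts S b) (nonb_darts T b)"
    unfolding bij_betw_def
  proof
    show "inj_on (\<lambda>d. g (d, sub_idx b A (lab S d))) (nonb_darts S b)"
    proof (rule inj_onI)
      fix d1 d2 assume d1: "d1 \<in> nonb_darts S b" and d2: "d2 \<in> nonb_darts S b"
        and e: "g (d1, sub_idx b A (lab S d1)) = g (d2, sub_idx b A (lab S d2))"
      let ?x1 = "(d1, sub_idx b A (lab S d1))" let ?x2 = "(d2, sub_idx b A (lab S d2))"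
      have x1: "?x1 \<in> darts G0" "lab G0 ?x1 = lab S d1" using L4'[OF d1] by blast+
      have x2: "?x2 \<in> darts G0" "lab G0 ?x2 = lab S d2" using L4'[OF d2] by blast+
      have "f (init G0 ?x1) = f (init G0 ?x2)" using hx(2)[OF x1(1)] hx(2)[OF x2(1)] e by simp
      then have r: "rho (init G0 ?x1) = rho (init G0 ?x2)" using kq g0[OF x1(1)] g0[OF x2(1)] by blast
      have l: "lab G0 ?x1 = lab G0 ?x2" using hx(3)[OF x1(1)] hx(3)[OF x2(1)] e by simp
      have nb: "lab G0 ?x1 \<notin> {b, sinv b}" using x1(2) d1 unfolding nonb_darts_def by simp
      have "?x1 = ?x2" by (rule nonb_eq[OF x1(1) x2(1) l nb r])
      then show "d1 = d2" by simp
    qed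
    show "(\<lambda>d. g (d, sub_idx b A (lab S d))) ` nonb_darts S b = nonb_darts T b"
    proof
      show "(\<lambda>d. g (d, sub_idx b A (lab S d))) ` nonb_darts S b \<subseteq> nonb_darts T b"
      proof
        fix D assume "D \<in> (\<lambda>d. g (d, sub_idx b A (lab S d))) ` nonb_darts S b"
        then obtain d where d: "d \<in> nonb_darts S b" "D = g (d, sub_idx b A (lab S d))" by blast
        have x: "(d, sub_idx b A (lab S d)) \<in> darts G0" "lab G0 (d, sub_idx b A (lab S d)) = lab S d"
          using L4'[OF d(1)] by blast+
        show "D \<in> nonb_darts T b" using hx(3,5)[OF x(1)] x(2) d unfolding nonb_darts_def by simp
      qed
      show "nonb_darts T b \<subseteq> (\<lambda>d. g (d, sub_idx b A (lab S d))) ` nonb_darts S b"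
      proof
        fix D assume D: "D \<in> nonb_darts T b"
        have DD: "D \<in> darts T" "lab T D \<notin> {b, sinv b}" using D unfolding nonb_darts_def by simp_all
        obtain x where x: "x \<in> darts G0" "D = g x" using DD(1) DT by blast
        have nb: "lab G0 x \<notin> {b, sinv b}" using DD(2) unfolding x(2) hx(3)[OF x(1)] .
        have "fst x \<in> nonb_darts S b \<and> snd x = sub_idx b A (lab S (fst x))" using cls[OF x(1)] nb by auto
        moreover obtain d0 i0 where x0: "x = (d0, i0)" by (cases x)
        ultimately have "D = (\<lambda>d. g (d, sub_idx b A (lab S d))) d0" "d0 \<in> nonb_darts S b" using x(2) by simp_all
        then show "D \<in> (\<lambda>d. g (d, sub_idx b A (lab S d))) ` nonb_darts S b" by (rule image_eqI)
      qed
    qed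
  qed

  define \<Phi> where "\<Phi> X = (\<Union>u\<in>X. bcomp T b `` {f (Inl u)})" for X
  have push: "(f (Inl u), f (Inl v)) \<in> bcomp T b" if uv: "(u, v) \<in> bcomp S b" for u v
  proof -
    have u: "u \<in> verts S" and v: "v \<in> verts S" and r: "(bstep S b)\<^sup>*\<^sup>* u v" using uv unfolding bcomp_def by auto
    from r have "(bstep T b)\<^sup>*\<^sup>* (f (Inl u)) (f (Inl v))"
    proof (induction rule: rtranclp_induct)
      case base then show ?case by simp
    next
      case (step v1 v2)
      from step(2) obtain d where d: "d \<in> darts S" "lab S d \<in> {b, sinv b}" "init S d = v1" "term_v S d = v2"
        unfolding bstep_def by blast
      have y: "(d, 0) \<in> darts G0" "lab G0 (d, 0) = lab S d" "init G0 (d, 0) = Inl (init S d)"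
           "term_v G0 (d, 0) = Inl (term_v S d)" using L3[OF d(1,2)] by auto
      have "bstep T b (f (Inl v1)) (f (Inl v2))" unfolding bstep_def
        using hx[OF y(1)] y d by (intro bexI[of _ "g (d, 0)"]) auto
      then show ?case using step(3) by simp
    qed
    then show ?thesis unfolding bcomp_def using fv inlv u v by blast
  qed
  have PhiS: "\<Phi> (bcomp S b `` {v}) = bcomp T b `` {f (Inl v)}" if v: "v \<in> verts S" for v
  proof -
    have "bcomp T b `` {f (Inl u)} = bcomp T b `` {f (Inl v)}" if "u \<in> bcomp S b `` {v}" for u
    proof -
      have "(v, u) \<in> bcomp S b" using that by simp
      then have "(f (Inl v), f (Inl u)) \<in> bcomp T b" by (rule push)
      then show ?thesis using eqT by (simp add: equiv_class_eq_iff)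
    qed
    moreover have "v \<in> bcomp S b `` {v}" using equiv_class_self[OF eqS v] .
    ultimately show ?thesis unfolding \<Phi>_def by blast
  qed
  define kap where "kap a = bcomp S b `` {prj (rho a)}" for a
  have lift: "\<exists>a'\<in>verts G0. f a' = Q \<and> kap a' = kap a"
    if r: "(bstep T b)\<^sup>*\<^sup>* P Q" and a: "a \<in> verts G0" "f a = P" for P Q a
    using r
  proof (induction rule: rtranclp_induct)
    case base then show ?case using a by blast
  next
    case (step Q R)
    from step(3) obtain a' where a': "a' \<in> verts G0" "f a' = Q" "kap a' = kap a" by blast
    from step(2) obtain D where D: "D \<in> darts T" "lab T D \<in> {b, sinv b}" "init T D = Q" "term_v T D = R"
      unfolding bstep_def by blast
    obtain x where x: "x \<in> darts G0" "D = g x" using D(1) DT by blast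
    have "f (init G0 x) = f a'" using hx(2)[OF x(1)] x(2) D(3) a'(2) by simp
    then have "rho (init G0 x) = rho a'" using kq g0[OF x(1)] a'(1) by blast
    moreover have "lab G0 x \<in> {b, sinv b}" using hx(3)[OF x(1)] x(2) D(2) by simp
    ultimately have "kap (term_v G0 x) = kap a'" using kap[OF x(1)] unfolding kap_def by simp
    moreover have "f (term_v G0 x) = R" using hx(4)[OF x(1)] x(2) D(4) by simp
    ultimately show ?case using g0[OF x(1)] a'(3) by metis
  qed

  show "\<exists>\<Phi>. bij_betw \<Phi> (verts S // bcomp S b) (verts T // bcomp T b)
          \<and> (\<forall>v\<in>verts S. \<Phi> (bcomp S b `` {v}) = bcomp T b `` {f (Inl v)})
          \<and> (\<forall>d\<in>nonb_darts S b.
               let d' = g (d, sub_idx b A (lab S d)) in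
                 lab T d' = lab S d
               \<and> dinv T d' = g (dinv S d, sub_idx b A (lab S (dinv S d)))
               \<and> \<Phi> (bcomp S b `` {init S d}) = bcomp T b `` {init T d'})"
  proof (intro exI conjI)
    show "bij_betw \<Phi> (verts S // bcomp S b) (verts T // bcomp T b)"
      unfolding bij_betw_def
    proof
      show "inj_on \<Phi> (verts S // bcomp S b)"
      proof (rule inj_onI)
        fix X Y assume X: "X \<in> verts S // bcomp S b" and Y: "Y \<in> verts S // bcomp S b" and e: "\<Phi> X = \<Phi> Y"
        obtain u where u: "X = bcomp S b `` {u}" "u \<in> verts S" using X by (auto elim: quotientE)
        obtain v where v: "Y = bcomp S b `` {v}" "v \<in> verts S" using Y by (auto elim: quotientE)
        have "bcomp T b `` {f (Inl u)} = bcomp T b `` {f (Inl v)}" using e u v PhiS by simp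
        then have "(f (Inl u), f (Inl v)) \<in> bcomp T b"
          using eqT fv[OF inlv[OF u(2)]] fv[OF inlv[OF v(2)]] by (simp add: eq_equiv_class_iff)
        then have "(bstep T b)\<^sup>*\<^sup>* (f (Inl u)) (f (Inl v))" unfolding bcomp_def by simp
        then obtain a' where a': "a' \<in> verts G0" "f a' = f (Inl v)" "kap a' = kap (Inl u)"
          using lift inlv[OF u(2)] by blast
        have "rho a' = rho (Inl v)" using kq a'(1,2) inlv[OF v(2)] by blast
        then have "kap (Inl v) = kap (Inl u)" using a'(3) unfolding kap_def by simp
        then show "X = Y" using u v unfolding kap_def prj_def by simp
      qed
      show "\<Phi> ` (verts S // bcomp S b) = verts T // bcomp T b"
      proof
        show "\<Phi> ` (verts S // bcomp S b) \<subseteq> verts T // bcomp T b"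
        proof
          fix Z assume "Z \<in> \<Phi> ` (verts S // bcomp S b)"
          then obtain v where v: "Z = \<Phi> (bcomp S b `` {v})" "v \<in> verts S" by (auto elim: quotientE)
          then show "Z \<in> verts T // bcomp T b" using PhiS fv inlv by (simp add: quotientI)
        qed
        show "verts T // bcomp T b \<subseteq> \<Phi> ` (verts S // bcomp S b)"
        proof
          fix Z assume "Z \<in> verts T // bcomp T b"
          then obtain Q where Q: "Z = bcomp T b `` {Q}" "Q \<in> verts T" by (auto elim: quotientE)
          then obtain a where a: "a \<in> verts G0" "Q = f a" using VT by blast
          obtain v where v: "v \<in> verts S" "a = Inl v \<or> (\<exists>y\<in>darts G0. lab G0 y = b \<and> init G0 y = Inl v \<and> term_v G0 y = a)"
            using L2[OF a(1)] by blast
          have "(f (Inl v), Q) \<in> bcomp T b"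
            using v(2)
          proof
            assume "a = Inl v" then show ?thesis using a Q(2) eqT by (simp add: equiv_class_eq_iff)
          next
            assume "\<exists>y\<in>darts G0. lab G0 y = b \<and> init G0 y = Inl v \<and> term_v G0 y = a"
            then obtain y where y: "y \<in> darts G0" "lab G0 y = b" "init G0 y = Inl v" "term_v G0 y = a" by blast
            have "bstep T b (f (Inl v)) Q" unfolding bstep_def
              using hx[OF y(1)] y a by (intro bexI[of _ "g y"]) auto
            then show ?thesis unfolding bcomp_def using fv[OF inlv[OF v(1)]] Q(2) by auto
          qed
          then have "Z = \<Phi> (bcomp S b `` {v})" using Q(1) PhiS[OF v(1)] eqT by (simp add: equiv_class_eq_iff)
          then show "Z \<in> \<Phi> ` (verts S // bcomp S b)" using v(1) by (simp add: quotientI)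
        qed
      qed
    qed
    show "\<forall>v\<in>verts S. \<Phi> (bcomp S b `` {v}) = bcomp T b `` {f (Inl v)}" using PhiS by blast
    show "\<forall>d\<in>nonb_darts S b.
               let d' = g (d, sub_idx b A (lab S d)) in
                 lab T d' = lab S d
               \<and> dinv T d' = g (dinv S d, sub_idx b A (lab S (dinv S d)))
               \<and> \<Phi> (bcomp S b `` {init S d}) = bcomp T b `` {init T d'}"
    proof
      fix d assume d: "d \<in> nonb_darts S b"
      let ?i = "sub_idx b A (lab S d)"
      have L: "(d, ?i) \<in> darts G0 \<and> lab G0 (d, ?i) = lab S d
         \<and> dinv G0 (d, ?i) = (dinv S d, sub_idx b A (lab S (dinv S d)))
         \<and> ((?i = 0 \<and> init G0 (d, ?i) = Inl (init S d))
          \<or> ((d, 0) \<in> darts G0 \<and> lab G0 (d, 0) = b \<and> init G0 (d, 0) = Inl (init S d) \<and> term_v G0 (d, 0) = init G0 (d, ?i)))"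
        using L4'[OF d] by simp
      have dS: "d \<in> darts S" using d unfolding nonb_darts_def by simp
      have iS: "init S d \<in> verts S" using sf(3)[OF dS] .
      have x: "(d, ?i) \<in> darts G0" using L by blast
      have c: "(f (Inl (init S d)), f (init G0 (d, ?i))) \<in> bcomp T b"
      proof (cases "?i = 0 \<and> init G0 (d, ?i) = Inl (init S d)")
        case True
        have e0: "init G0 (d, ?i) = Inl (init S d)" using True by (rule conjunct2)
        have e: "f (init G0 (d, ?i)) = f (Inl (init S d))" unfolding e0 ..
        show ?thesis unfolding e using fv[OF inlv[OF iS]] eqT by (simp add: equiv_class_eq_iff)
      next
        case False
        then have y: "(d, 0) \<in> darts G0" "lab G0 (d, 0) = b" "init G0 (d, 0) = Inl (init S d)"
           "term_v G0 (d, 0) = init G0 (d, ?i)" using L by auto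
        have "bstep T b (f (Inl (init S d))) (f (init G0 (d, ?i)))" unfolding bstep_def
          using hx[OF y(1)] y by (intro bexI[of _ "g (d, 0)"]) auto
        then show ?thesis unfolding bcomp_def using fv[OF inlv[OF iS]] fv g0[OF x] by auto
      qed
      have "\<Phi> (bcomp S b `` {init S d}) = bcomp T b `` {init T (g (d, ?i))}"
        using PhiS[OF iS] c hx(2)[OF x] eqT by (simp add: equiv_class_eq_iff)
      then show "let d' = g (d, ?i) in lab T d' = lab S d
               \<and> dinv T d' = g (dinv S d, sub_idx b A (lab S (dinv S d)))
               \<and> \<Phi> (bcomp S b `` {init S d}) = bcomp T b `` {init T d'}"
        using hx(1,3)[OF x] L by (simp add: Let_def)
    qed
  qed
qed

end



theorem lemma9p7:
  fixes B :: "'b set" and b :: "'b \<times> bool" and A :: "('b \<times> bool) set"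
    and Ss :: "('v, 'd, 'b) lgraph list"
    and Ts :: "('v + ('d \<times> nat) set, 'd \<times> nat, 'b) lgraph list"
    and fv :: "nat \<Rightarrow> 'v + ('d \<times> nat) set \<Rightarrow> 'v + ('d \<times> nat) set"
    and fd :: "nat \<Rightarrow> 'd \<times> nat \<Rightarrow> 'd \<times> nat"
  assumes "finite B"
    and "\<forall>j<length Ss. labeled_graph B (Ss ! j) \<and> finite_graph (Ss ! j)
                        \<and> connected_graph (Ss ! j) \<and> tight (Ss ! j)"
    and "elementary_whitehead B b A"
    and "length Ts = length Ss"
    and "\<forall>j<length Ss. is_tightening (subdiv (wh_word b A) (Ss ! j)) (Ts ! j) (fv j) (fd j)"
  shows "(\<forall>j<length Ss. \<forall>d\<in>nonb_darts (Ss ! j) b.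
            \<exists>!i. i < length (wh_word b A (lab (Ss ! j) d)) \<and> wh_word b A (lab (Ss ! j) d) ! i = lab (Ss ! j) d)
       \<and> bij_betw (\<lambda>(j, d). (j, fd j (d, sub_idx b A (lab (Ss ! j) d))))
           {(j, d). j < length Ss \<and> d \<in> nonb_darts (Ss ! j) b}
           {(j, d'). j < length Ss \<and> d' \<in> nonb_darts (Ts ! j) b}
       \<and> (\<forall>j<length Ss. \<exists>\<Phi>.
            bij_betw \<Phi> (verts (Ss ! j) // bcomp (Ss ! j) b) (verts (Ts ! j) // bcomp (Ts ! j) b)
          \<and> (\<forall>v\<in>verts (Ss ! j). \<Phi> (bcomp (Ss ! j) b `` {v}) = bcomp (Ts ! j) b `` {fv j (Inl v)})
          \<and> (\<forall>d\<in>nonb_darts (Ss ! j) b.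
               let d' = fd j (d, sub_idx b A (lab (Ss ! j) d)) in
                 lab (Ts ! j) d' = lab (Ss ! j) d
               \<and> dinv (Ts ! j) d' = fd j (dinv (Ss ! j) d, sub_idx b A (lab (Ss ! j) (dinv (Ss ! j) d)))
               \<and> \<Phi> (bcomp (Ss ! j) b `` {init (Ss ! j) d}) = bcomp (Ts ! j) b `` {init (Ts ! j) d'}))"
proof -
  note a2 = assms(2) and a5 = assms(5)
  have W: "whs B b A (Ss ! j)" if "j < length Ss" for j
    unfolding whs_def using a2 that assms(3) by blast
  have P1: "\<forall>j<length Ss. \<forall>d\<in>nonb_darts (Ss ! j) b.
            \<exists>!i. i < length (wh_word b A (lab (Ss ! j) d)) \<and> wh_word b A (lab (Ss ! j) d) ! i = lab (Ss ! j) d"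
  proof (intro allI impI ballI)
    fix j d assume j: "j < length Ss" and d: "d \<in> nonb_darts (Ss ! j) b"
    have nb: "lab (Ss ! j) d \<noteq> b" "lab (Ss ! j) d \<noteq> sinv b" using d unfolding nonb_darts_def by auto
    show "\<exists>!i. i < length (wh_word b A (lab (Ss ! j) d)) \<and> wh_word b A (lab (Ss ! j) d) ! i = lab (Ss ! j) d"
      unfolding whs.pos_c[OF W[OF j] nb] by simp
  qed
  have bj: "bij_betw (\<lambda>d. fd j (d, sub_idx b A (lab (Ss ! j) d))) (nonb_darts (Ss ! j) b) (nonb_darts (Ts ! j) b)"
    if j: "j < length Ss" for j
    using whs.main(1)[OF W[OF j] a5[rule_format, OF j]] .
  have P2: "bij_betw (\<lambda>(j, d). (j, fd j (d, sub_idx b A (lab (Ss ! j) d))))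
           {(j, d). j < length Ss \<and> d \<in> nonb_darts (Ss ! j) b}
           {(j, d'). j < length Ss \<and> d' \<in> nonb_darts (Ts ! j) b}"
    unfolding bij_betw_def
  proof
    show "inj_on (\<lambda>(j, d). (j, fd j (d, sub_idx b A (lab (Ss ! j) d)))) {(j, d). j < length Ss \<and> d \<in> nonb_darts (Ss ! j) b}"
    proof (rule inj_onI)
      fix p q assume p: "p \<in> {(j, d). j < length Ss \<and> d \<in> nonb_darts (Ss ! j) b}"
        and q: "q \<in> {(j, d). j < length Ss \<and> d \<in> nonb_darts (Ss ! j) b}"
        and e: "(\<lambda>(j, d). (j, fd j (d, sub_idx b A (lab (Ss ! j) d)))) p = (\<lambda>(j, d). (j, fd j (d, sub_idx b A (lab (Ss ! j) d)))) q"
      obtain j d where pj: "p = (j, d)" by (cases p)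
      obtain j' d' where qj: "q = (j', d')" by (cases q)
      have jj: "j' = j" using e pj qj by simp
      have j: "j < length Ss" "d \<in> nonb_darts (Ss ! j) b" "d' \<in> nonb_darts (Ss ! j) b" using p q pj qj jj by auto
      have "fd j (d, sub_idx b A (lab (Ss ! j) d)) = fd j (d', sub_idx b A (lab (Ss ! j) d'))" using e pj qj jj by simp
      then have "d = d'" using bij_betw_imp_inj_on[OF bj[OF j(1)]] j(2,3) unfolding inj_on_def by blast
      then show "p = q" using pj qj jj by simp
    qed
    show "(\<lambda>(j, d). (j, fd j (d, sub_idx b A (lab (Ss ! j) d)))) ` {(j, d). j < length Ss \<and> d \<in> nonb_darts (Ss ! j) b}
        = {(j, d'). j < length Ss \<and> d' \<in> nonb_darts (Ts ! j) b}"
    proof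
      show "(\<lambda>(j, d). (j, fd j (d, sub_idx b A (lab (Ss ! j) d)))) ` {(j, d). j < length Ss \<and> d \<in> nonb_darts (Ss ! j) b}
        \<subseteq> {(j, d'). j < length Ss \<and> d' \<in> nonb_darts (Ts ! j) b}"
      proof
        fix p assume "p \<in> (\<lambda>(j, d). (j, fd j (d, sub_idx b A (lab (Ss ! j) d)))) ` {(j, d). j < length Ss \<and> d \<in> nonb_darts (Ss ! j) b}"
        then obtain j d where jd: "j < length Ss" "d \<in> nonb_darts (Ss ! j) b" "p = (j, fd j (d, sub_idx b A (lab (Ss ! j) d)))"
          by auto
        have "fd j (d, sub_idx b A (lab (Ss ! j) d)) \<in> nonb_darts (Ts ! j) b"
          using bij_betw_imp_surj_on[OF bj[OF jd(1)]] jd(2) by blast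
        then show "p \<in> {(j, d'). j < length Ss \<and> d' \<in> nonb_darts (Ts ! j) b}" using jd by simp
      qed
      show "{(j, d'). j < length Ss \<and> d' \<in> nonb_darts (Ts ! j) b} \<subseteq>
         (\<lambda>(j, d). (j, fd j (d, sub_idx b A (lab (Ss ! j) d)))) ` {(j, d). j < length Ss \<and> d \<in> nonb_darts (Ss ! j) b}"
      proof
        fix p assume p: "p \<in> {(j, d'). j < length Ss \<and> d' \<in> nonb_darts (Ts ! j) b}"
        obtain j D where pj: "p = (j, D)" by (cases p)
        have j: "j < length Ss" "D \<in> nonb_darts (Ts ! j) b" using p pj by auto
        then obtain d where d: "d \<in> nonb_darts (Ss ! j) b" "D = fd j (d, sub_idx b A (lab (Ss ! j) d))"
          using bij_betw_imp_surj_on[OF bj[OF j(1)]] by blast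
        have "p = (\<lambda>(j, d). (j, fd j (d, sub_idx b A (lab (Ss ! j) d)))) (j, d)" using pj d by simp
        moreover have "(j, d) \<in> {(j, d). j < length Ss \<and> d \<in> nonb_darts (Ss ! j) b}" using j d by simp
        ultimately show "p \<in> (\<lambda>(j, d). (j, fd j (d, sub_idx b A (lab (Ss ! j) d)))) ` {(j, d). j < length Ss \<and> d \<in> nonb_darts (Ss ! j) b}"
          by (rule image_eqI)
      qed
    qed
  qed
  have P3: "\<forall>j<length Ss. \<exists>\<Phi>.
            bij_betw \<Phi> (verts (Ss ! j) // bcomp (Ss ! j) b) (verts (Ts ! j) // bcomp (Ts ! j) b)
          \<and> (\<forall>v\<in>verts (Ss ! j). \<Phi> (bcomp (Ss ! j) b `` {v}) = bcomp (Ts ! j) b `` {fv j (Inl v)})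
          \<and> (\<forall>d\<in>nonb_darts (Ss ! j) b.
               let d' = fd j (d, sub_idx b A (lab (Ss ! j) d)) in
                 lab (Ts ! j) d' = lab (Ss ! j) d
               \<and> dinv (Ts ! j) d' = fd j (dinv (Ss ! j) d, sub_idx b A (lab (Ss ! j) (dinv (Ss ! j) d)))
               \<and> \<Phi> (bcomp (Ss ! j) b `` {init (Ss ! j) d}) = bcomp (Ts ! j) b `` {init (Ts ! j) d'})"
  proof (intro allI impI)
    fix j assume j: "j < length Ss"
    show "\<exists>\<Phi>.
            bij_betw \<Phi> (verts (Ss ! j) // bcomp (Ss ! j) b) (verts (Ts ! j) // bcomp (Ts ! j) b)
          \<and> (\<forall>v\<in>verts (Ss ! j). \<Phi> (bcomp (Ss ! j) b `` {v}) = bcomp (Ts ! j) b `` {fv j (Inl v)})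
          \<and> (\<forall>d\<in>nonb_darts (Ss ! j) b.
               let d' = fd j (d, sub_idx b A (lab (Ss ! j) d)) in
                 lab (Ts ! j) d' = lab (Ss ! j) d
               \<and> dinv (Ts ! j) d' = fd j (dinv (Ss ! j) d, sub_idx b A (lab (Ss ! j) (dinv (Ss ! j) d)))
               \<and> \<Phi> (bcomp (Ss ! j) b `` {init (Ss ! j) d}) = bcomp (Ts ! j) b `` {init (Ts ! j) d'})"
      by (rule whs.main(2)[OF W[OF j] a5[rule_format, OF j]])
  qed
  show ?thesis using P1 P2 P3 by blast
qed


end
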